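(* Let $(A^{\mathbb{Z}},T)$ be the Pacman cellular automaton and let $w\in A^{+}$ be a nonempty finite word. For each integer $i\geq 0$ define $$x^{i}= {}^{\infty}\mathtt{0}\,.\,w\,\mathtt{1}\,\mathtt{0}^{i}\,\mathtt{K}\,\mathtt{0}^{\infty},$$ that is, $x^i$ has the word $w$ starting at coordinate $0$, followed immediately by the symbol $\mathtt{1}$, then $i$ copies of $\mathtt{0}$, then the symbol $\mathtt{K}$, and all other coordinates equal to $\mathtt{0}$. Then there exist integers $N,M\geq 0$ such that for every integer $j\geq 0$, $$(T^{N+j}x^{M+j})_{0}\in\{\mathtt{G},\mathtt{K},\mathtt{D}\}.$$
   Context: Let $A=\{\mathtt{0},\mathtt{1},\mathtt{G},\mathtt{K},\mathtt{P},\mathtt{D}\}$ (intended meanings: $\mathtt{0}$ empty space, $\mathtt{1}$ empty door, $\mathtt{G}$ ghost, $\mathtt{K}$ keymaster ghost, $\mathtt{P}$ pacman, $\mathtt{D}$ door with ghost). $A^{+}$ denotes the set of nonempty finite words over $A$. The Pacman CA is the map $T:A^{\mathbb{Z}}\to A^{\mathbb{Z}}$ defined coordinatewise as follows, writing $a=x_{i-1}$, $b=x_i$, $c=x_{i+1}$: - $(Tx)_i=\mathtt{0}$ if $\big(a\in\{\mathtt{0},\mathtt{G},\mathtt{K}\}\wedge[(b\in\{\mathtt{0},\mathtt{G},\mathtt{K}\}\wedge c\in\{\mathtt{0},\mathtt{1},\mathtt{P}\})\vee(b=\mathtt{P}\wedge c\notin\{\mathtt{1},\mathtt{D}\})]\big)\vee\big(a\in\{\mathtt{1},\mathtt{D}\}\wedge[(b\in\{\mathtt{0},\mathtt{K}\}\wedge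 c\in\{\mathtt{0},\mathtt{1},\mathtt{P}\})\vee(b=\mathtt{P}\wedge c\notin\{\mathtt{1},\mathtt{D}\})]\big)$; - $(Tx)_i=\mathtt{1}$ if $b\in\{\mathtt{1},\mathtt{D}\}\wedge c\notin\{\mathtt{K},\mathtt{D}\}$; - $(Tx)_i=\mathtt{G}$ if $(a\in\{\mathtt{0},\mathtt{G},\mathtt{K}\}\wedge b\in\{\mathtt{0},\mathtt{G},\mathtt{K}\}\wedge c\in\{\mathtt{G},\mathtt{D}\})\vee(a\in\{\mathtt{1},\mathtt{D}\}\wedge b\in\{\mathtt{0},\mathtt{K}\}\wedge c=\mathtt{D})$; - $(Tx)_i=\mathtt{K}$ if $\big(c=\mathtt{K}\wedge[(a\in\{\mathtt{0},\mathtt{G},\mathtt{K}\}\wedge b\in\{\mathtt{0},\mathtt{G},\mathtt{K}\})\vee(a\in\{\mathtt{1},\mathtt{D}\}\wedge b\in\{\mathtt{0},\mathtt{K}\})]\big)\vee(a=\mathtt{P}\wedge b\notin\{\mathtt{1},\mathtt{D}\}\wedge c\in\{\mathtt{1},\mathtt{D}\})\vee(b=\mathtt{P}\wedge c\in\{\mathtt{1},\mathtt{D}\})$; - $(Tx)_i=\mathtt{P}$ if $\big(a=\mathtt{1}\wedge[(b\in\{\mathtt{0},\mathtt{K}\}\wedge c=\mathtt{G})\vee b=\mathtt{G}]\big)\vee(a=\mathtt{P}\wedge b\notin\{\mathtt{1},\mathtt{D}\}\wedge c\notin\{\mathtt{1},\mathtt{D}\})$; - $(Tx)_i=\mathtt{D}$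 if $b\in\{\mathtt{1},\mathtt{D}\}\wedge c\in\{\mathtt{K},\mathtt{D}\}$. Notation ${}^{\infty}\mathtt{0}\,.\,u\,\mathtt{0}^{\infty}$ means the point whose coordinates $0,1,\dots,|u|-1$ spell the word $u$ and all other coordinates are $\mathtt{0}$; the dot marks coordinate $0$. *)

theory Defs
  imports Main
begin

datatype cell = S0 | S1 | SG | SK | SP | SD
  (* S0 = 0 (empty space), S1 = 1 (empty door), SG = G, SK = K, SP = P, SD = D *)

definition pac_rule :: "cell \<Rightarrow> cell \<Rightarrow> cell \<Rightarrow> cell" where
  "pac_rule a b c =
    (if (a \<in> {S0,SG,SK} \<and> ((b \<in> {S0,SG,SK} \<and> c \<in> {S0,S1,SP}) \<or> (b = SP \<and> c \<notin> {S1,SD})))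
        \<or> (a \<in> {S1,SD} \<and> ((b \<in> {S0,SK} \<and> c \<in> {S0,S1,SP}) \<or> (b = SP \<and> c \<notin> {S1,SD})))
     then S0
     else if b \<in> {S1,SD} \<and> c \<notin> {SK,SD} then S1
     else if (a \<in> {S0,SG,SK} \<and> b \<in> {S0,SG,SK} \<and> c \<in> {SG,SD}) \<or> (a \<in> {S1,SD} \<and> b \<in> {S0,SK} \<and> c = SD)
     then SG
     else if (c = SK \<and> ((a \<in> {S0,SG,SK} \<and> b \<in> {S0,SG,SK}) \<or> (a \<in> {S1,SD} \<and> b \<in> {S0,SK})))
        \<or> (a = SP \<and> b \<notin> {S1,SD} \<and> c \<in> {S1,SD}) \<or> (b = SP \<and> c \<in> {S1,SD})
     then SK
     else if (a = S1 \<and> ((b \<in> {S0,SK} \<and> c = SG) \<or> b = SG)) \<or> (a = SP \<and> b \<notin> {S1,SD} \<and> c \<notin> {S1,SD})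
     then SP
     else SD)"

definition pacT :: "(int \<Rightarrow> cell) \<Rightarrow> (int \<Rightarrow> cell)" where
  "pacT x = (\<lambda>i. pac_rule (x (i - 1)) (x i) (x (i + 1)))"

definition word_pt :: "cell list \<Rightarrow> (int \<Rightarrow> cell)" where
  "word_pt u = (\<lambda>i. if 0 \<le> i \<and> i < int (length u) then u ! nat i else S0)"

end

theory Submission
  imports Defs
begin

lemma pr_tab[simp]:
  "pac_rule S0 S0 S0 = S0"
  "pac_rule S0 S0 S1 = S0"
  "pac_rule S0 S0 SG = SG"
  "pac_rule S0 S0 SK = SK"
  "pac_rule S0 S0 SP = S0"
  "pac_rule S0 S0 SD = SG"
  "pac_rule S0 S1 S0 = S1"
  "pac_rule S0 S1 S1 = S1"
  "pac_rule S0 S1 SG = S1"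
  "pac_rule S0 S1 SK = SD"
  "pac_rule S0 S1 SP = S1"
  "pac_rule S0 S1 SD = SD"
  "pac_rule S0 SG S0 = S0"
  "pac_rule S0 SG S1 = S0"
  "pac_rule S0 SG SG = SG"
  "pac_rule S0 SG SK = SK"
  "pac_rule S0 SG SP = S0"
  "pac_rule S0 SG SD = SG"
  "pac_rule S0 SK S0 = S0"
  "pac_rule S0 SK S1 = S0"
  "pac_rule S0 SK SG = SG"
  "pac_rule S0 SK SK = SK"
  "pac_rule S0 SK SP = S0"
  "pac_rule S0 SK SD = SG"
  "pac_rule S0 SP S0 = S0"
  "pac_rule S0 SP S1 = SK"
  "pac_rule S0 SP SG = S0"
  "pac_rule S0 SP SK = S0"
  "pac_rule S0 SP SP = S0"
  "pac_rule S0 SP SD = SK"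
  "pac_rule S0 SD S0 = S1"
  "pac_rule S0 SD S1 = S1"
  "pac_rule S0 SD SG = S1"
  "pac_rule S0 SD SK = SD"
  "pac_rule S0 SD SP = S1"
  "pac_rule S0 SD SD = SD"
  "pac_rule S1 S0 S0 = S0"
  "pac_rule S1 S0 S1 = S0"
  "pac_rule S1 S0 SG = SP"
  "pac_rule S1 S0 SK = SK"
  "pac_rule S1 S0 SP = S0"
  "pac_rule S1 S0 SD = SG"
  "pac_rule S1 S1 S0 = S1"
  "pac_rule S1 S1 S1 = S1"
  "pac_rule S1 S1 SG = S1"
  "pac_rule S1 S1 SK = SD"
  "pac_rule S1 S1 SP = S1"
  "pac_rule S1 S1 SD = SD"
  "pac_rule S1 SG S0 = SP"
  "pac_rule S1 SG S1 = SP"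
  "pac_rule S1 SG SG = SP"
  "pac_rule S1 SG SK = SP"
  "pac_rule S1 SG SP = SP"
  "pac_rule S1 SG SD = SP"
  "pac_rule S1 SK S0 = S0"
  "pac_rule S1 SK S1 = S0"
  "pac_rule S1 SK SG = SP"
  "pac_rule S1 SK SK = SK"
  "pac_rule S1 SK SP = S0"
  "pac_rule S1 SK SD = SG"
  "pac_rule S1 SP S0 = S0"
  "pac_rule S1 SP S1 = SK"
  "pac_rule S1 SP SG = S0"
  "pac_rule S1 SP SK = S0"
  "pac_rule S1 SP SP = S0"
  "pac_rule S1 SP SD = SK"
  "pac_rule S1 SD S0 = S1"
  "pac_rule S1 SD S1 = S1"
  "pac_rule S1 SD SG = S1"
  "pac_rule S1 SD SK = SD"
  "pac_rule S1 SD SP = S1"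
  "pac_rule S1 SD SD = SD"
  "pac_rule SG S0 S0 = S0"
  "pac_rule SG S0 S1 = S0"
  "pac_rule SG S0 SG = SG"
  "pac_rule SG S0 SK = SK"
  "pac_rule SG S0 SP = S0"
  "pac_rule SG S0 SD = SG"
  "pac_rule SG S1 S0 = S1"
  "pac_rule SG S1 S1 = S1"
  "pac_rule SG S1 SG = S1"
  "pac_rule SG S1 SK = SD"
  "pac_rule SG S1 SP = S1"
  "pac_rule SG S1 SD = SD"
  "pac_rule SG SG S0 = S0"
  "pac_rule SG SG S1 = S0"
  "pac_rule SG SG SG = SG"
  "pac_rule SG SG SK = SK"
  "pac_rule SG SG SP = S0"
  "pac_rule SG SG SD = SG"
  "pac_rule SG SK S0 = S0"
  "pac_rule SG SK S1 = S0"
  "pac_rule SG SK SG = SG"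
  "pac_rule SG SK SK = SK"
  "pac_rule SG SK SP = S0"
  "pac_rule SG SK SD = SG"
  "pac_rule SG SP S0 = S0"
  "pac_rule SG SP S1 = SK"
  "pac_rule SG SP SG = S0"
  "pac_rule SG SP SK = S0"
  "pac_rule SG SP SP = S0"
  "pac_rule SG SP SD = SK"
  "pac_rule SG SD S0 = S1"
  "pac_rule SG SD S1 = S1"
  "pac_rule SG SD SG = S1"
  "pac_rule SG SD SK = SD"
  "pac_rule SG SD SP = S1"
  "pac_rule SG SD SD = SD"
  "pac_rule SK S0 S0 = S0"
  "pac_rule SK S0 S1 = S0"
  "pac_rule SK S0 SG = SG"
  "pac_rule SK S0 SK = SK"
  "pac_rule SK S0 SP = S0"
  "pac_rule SK S0 SD = SG"
  "pac_rule SK S1 S0 = S1"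
  "pac_rule SK S1 S1 = S1"
  "pac_rule SK S1 SG = S1"
  "pac_rule SK S1 SK = SD"
  "pac_rule SK S1 SP = S1"
  "pac_rule SK S1 SD = SD"
  "pac_rule SK SG S0 = S0"
  "pac_rule SK SG S1 = S0"
  "pac_rule SK SG SG = SG"
  "pac_rule SK SG SK = SK"
  "pac_rule SK SG SP = S0"
  "pac_rule SK SG SD = SG"
  "pac_rule SK SK S0 = S0"
  "pac_rule SK SK S1 = S0"
  "pac_rule SK SK SG = SG"
  "pac_rule SK SK SK = SK"
  "pac_rule SK SK SP = S0"
  "pac_rule SK SK SD = SG"
  "pac_rule SK SP S0 = S0"
  "pac_rule SK SP S1 = SK"
  "pac_rule SK SP SG = S0"
  "pac_rule SK SP SK = S0"
  "pac_rule SK SP SP = S0"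
  "pac_rule SK SP SD = SK"
  "pac_rule SK SD S0 = S1"
  "pac_rule SK SD S1 = S1"
  "pac_rule SK SD SG = S1"
  "pac_rule SK SD SK = SD"
  "pac_rule SK SD SP = S1"
  "pac_rule SK SD SD = SD"
  "pac_rule SP S0 S0 = SP"
  "pac_rule SP S0 S1 = SK"
  "pac_rule SP S0 SG = SP"
  "pac_rule SP S0 SK = SP"
  "pac_rule SP S0 SP = SP"
  "pac_rule SP S0 SD = SK"
  "pac_rule SP S1 S0 = S1"
  "pac_rule SP S1 S1 = S1"
  "pac_rule SP S1 SG = S1"
  "pac_rule SP S1 SK = SD"
  "pac_rule SP S1 SP = S1"
  "pac_rule SP S1 SD = SD"
  "pac_rule SP SG S0 = SP"
  "pac_rule SP SG S1 = SK"
  "pac_rule SP SG SG = SP"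
  "pac_rule SP SG SK = SP"
  "pac_rule SP SG SP = SP"
  "pac_rule SP SG SD = SK"
  "pac_rule SP SK S0 = SP"
  "pac_rule SP SK S1 = SK"
  "pac_rule SP SK SG = SP"
  "pac_rule SP SK SK = SP"
  "pac_rule SP SK SP = SP"
  "pac_rule SP SK SD = SK"
  "pac_rule SP SP S0 = SP"
  "pac_rule SP SP S1 = SK"
  "pac_rule SP SP SG = SP"
  "pac_rule SP SP SK = SP"
  "pac_rule SP SP SP = SP"
  "pac_rule SP SP SD = SK"
  "pac_rule SP SD S0 = S1"
  "pac_rule SP SD S1 = S1"
  "pac_rule SP SD SG = S1"
  "pac_rule SP SD SK = SD"
  "pac_rule SP SD SP = S1"
  "pac_rule SP SD SD = SD"
  "pac_rule SD S0 S0 = S0"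
  "pac_rule SD S0 S1 = S0"
  "pac_rule SD S0 SG = SD"
  "pac_rule SD S0 SK = SK"
  "pac_rule SD S0 SP = S0"
  "pac_rule SD S0 SD = SG"
  "pac_rule SD S1 S0 = S1"
  "pac_rule SD S1 S1 = S1"
  "pac_rule SD S1 SG = S1"
  "pac_rule SD S1 SK = SD"
  "pac_rule SD S1 SP = S1"
  "pac_rule SD S1 SD = SD"
  "pac_rule SD SG S0 = SD"
  "pac_rule SD SG S1 = SD"
  "pac_rule SD SG SG = SD"
  "pac_rule SD SG SK = SD"
  "pac_rule SD SG SP = SD"
  "pac_rule SD SG SD = SD"
  "pac_rule SD SK S0 = S0"
  "pac_rule SD SK S1 = S0"
  "pac_rule SD SK SG = SD"
  "pac_rule SD SK SK = SK"
  "pac_rule SD SK SP = S0"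
  "pac_rule SD SK SD = SG"
  "pac_rule SD SP S0 = S0"
  "pac_rule SD SP S1 = SK"
  "pac_rule SD SP SG = S0"
  "pac_rule SD SP SK = S0"
  "pac_rule SD SP SP = S0"
  "pac_rule SD SP SD = SK"
  "pac_rule SD SD S0 = S1"
  "pac_rule SD SD S1 = S1"
  "pac_rule SD SD SG = S1"
  "pac_rule SD SD SK = SD"
  "pac_rule SD SD SP = S1"
  "pac_rule SD SD SD = SD"
  by (simp_all add: pac_rule_def)

lemma pacT_app: "pacT x i = pac_rule (x (i - 1)) (x i) (x (i + 1))"
  by (simp add: pacT_def)

lemma rule_door: "b \<in> {S1,SD} \<Longrightarrow> pac_rule a b c = (if c \<in> {SK,SD} then SD else S1)"
  by (cases a; cases b; cases c; simp)

lemma rule_aclass: "a \<in> {S0,SG,SK} \<Longrightarrow> pac_rule a b c = pac_rule S0 b c"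
  by (cases a; cases b; cases c; simp)

lemma rule_left: "a \<in> {S0,SG,SK} \<Longrightarrow> b \<in> {S0,SG,SK} \<Longrightarrow> pac_rule a b c \<in> {S0,SG,SK}"
  by (cases a; cases b; cases c; simp)

lemma rule_G: "pac_rule a b c = SG \<Longrightarrow> c \<in> {SG,SD}"
  by (cases a; cases b; cases c; simp)

lemma rule_P: "pac_rule a b c = SP \<Longrightarrow> (a = S1 \<and> (c = SG \<or> b = SG)) \<or> a = SP"
  by (cases a; cases b; cases c; simp)

lemma rule_K: "pac_rule a b c = SK \<Longrightarrow> c = SK \<or> a = SP \<or> b = SP"
  by (cases a; cases b; cases c; simp)

lemma rule_quiet: "a \<noteq> SP \<Longrightarrow> b \<in> {S0,S1} \<Longrightarrow> c \<in> {S0,S1,SP} \<Longrightarrow> pac_rule a b c = b"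
  by (cases a; cases b; cases c; simp)

lemma word_pt_neg: "i < 0 \<Longrightarrow> word_pt u i = S0"
  by (simp add: word_pt_def)

lemma word_pt_Nil: "word_pt [] i = S0"
  by (auto simp add: word_pt_def)

lemma word_pt_Cons0: "word_pt (b # u) 0 = b"
  by (simp add: word_pt_def)

lemma word_pt_Cons: assumes "i > 0" shows "word_pt (b # u) i = word_pt u (i - 1)"
proof -
  have "nat i = Suc (nat (i - 1))" using assms by arith
  then show ?thesis using assms by (auto simp: word_pt_def)
qed



fun lst :: "cell \<Rightarrow> cell list \<Rightarrow> cell list" where
  "lst a [] = (if a = SP then [SP] else [])"
| "lst a [b] = pac_rule a b S0 # lst b []"
| "lst a (b # c # u) = pac_rule a b c # lst b (c # u)"

definition hdz :: "cell list \<Rightarrow> cell" where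
  "hdz v = (case v of [] \<Rightarrow> S0 | c # _ \<Rightarrow> c)"

lemma hdz_simps[simp]: "hdz [] = S0" "hdz (c # v) = c"
  by (simp_all add: hdz_def)

lemma lst_Cons: "lst a (b # u) = pac_rule a b (hdz u) # lst b u"
  by (cases u) auto

lemma lst_correct: "0 \<le> k \<Longrightarrow> word_pt (lst a u) k =
   pac_rule (if k = 0 then a else word_pt u (k - 1)) (word_pt u k) (word_pt u (k + 1))"
proof (induction u arbitrary: a k)
  case Nil
  then show ?case
    by (cases "k = 0"; cases a) (auto simp: word_pt_Nil word_pt_Cons0 word_pt_Cons pac_rule_def)
next
  case (Cons b u)
  show ?case
  proof (cases "k = 0")
    case True
    then show ?thesis by (cases u) (auto simp: lst_Cons word_pt_Cons0 word_pt_Cons word_pt_Nil)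
  next
    case False
    then have k: "k > 0" using Cons.prems by simp
    have "word_pt (lst a (b # u)) k = word_pt (lst b u) (k - 1)"
      using k by (simp add: lst_Cons word_pt_Cons)
    also have "\<dots> = pac_rule (if k - 1 = 0 then b else word_pt u (k - 1 - 1)) (word_pt u (k - 1)) (word_pt u (k - 1 + 1))"
      using Cons.IH[of "k - 1" b] k by simp
    also have "\<dots> = pac_rule (if k = 0 then a else word_pt (b # u) (k - 1)) (word_pt (b # u) k) (word_pt (b # u) (k + 1))"
      using k by (auto simp: word_pt_Cons word_pt_Cons0)
    finally show ?thesis .
  qed
qed

definition cfg :: "(int \<Rightarrow> cell) \<Rightarrow> cell list \<Rightarrow> bool" where
  "cfg x u \<longleftrightarrow> (\<forall>i<0. x i \<in> {S0,SG,SK}) \<and> (\<forall>i\<ge>0. x i = word_pt u i)"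

lemma cfg_step: assumes "cfg x u" shows "cfg (pacT x) (lst S0 u)"
  unfolding cfg_def
proof (intro conjI allI impI)
  fix i :: int assume "i < 0"
  then have "x (i - 1) \<in> {S0,SG,SK}" "x i \<in> {S0,SG,SK}" using assms by (auto simp: cfg_def)
  then show "pacT x i \<in> {S0,SG,SK}"
    unfolding pacT_app by (rule rule_left)
next
  fix i :: int assume i: "0 \<le> i"
  show "pacT x i = word_pt (lst S0 u) i"
  proof (cases "i = 0")
    case True
    have "x (-1) \<in> {S0,SG,SK}" using assms by (simp add: cfg_def)
    then have "pac_rule (x (-1)) (x 0) (x 1) = pac_rule S0 (x 0) (x 1)" by (rule rule_aclass)
    then show ?thesis using True assms by (simp add: pacT_app lst_correct cfg_def)
  next
    case False
    then show ?thesis using i assms by (simp add: pacT_app lst_correct cfg_def)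
  qed
qed

lemma lst_tail: "set R \<subseteq> {S0,S1} \<Longrightarrow> a \<noteq> SP \<Longrightarrow> lst a R = R"
proof (induction R arbitrary: a)
  case Nil then show ?case by simp
next
  case (Cons b R)
  have "hdz R \<in> {S0,S1,SP}" using Cons.prems by (cases R) auto
  then have "pac_rule a b (hdz R) = b" using Cons.prems by (intro rule_quiet) auto
  moreover have "lst b R = R" using Cons by auto
  ultimately show ?case by (simp add: lst_Cons)
qed

lemma lst_prefix: "set q \<subseteq> {S0,S1} \<Longrightarrow> a \<noteq> SP \<Longrightarrow> hdz v \<in> {S0,S1,SP} \<Longrightarrow>
   lst a (q @ v) = q @ lst (last (a # q)) v"
proof (induction q arbitrary: a)
  case Nil then show ?case by simp
next
  case (Cons b q)
  have "hdz (q @ v) \<in> {S0,S1,SP}" using Cons.prems by (cases q) auto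
  then have "pac_rule a b (hdz (q @ v)) = b" using Cons.prems by (intro rule_quiet) auto
  moreover have "lst b (q @ v) = q @ lst (last (b # q)) v" using Cons by auto
  ultimately show ?case by (simp add: lst_Cons)
qed

lemma last01: "set q \<subseteq> {S0,S1} \<Longrightarrow> last (S0 # q) \<in> {S0,S1}"
  by (induction q) auto



definition mu1 :: "cell list \<times> cell \<times> cell list \<Rightarrow> nat" where
  "mu1 p = (case p of (q,h,R) \<Rightarrow> count_list q S1 + (if h = SD then 1 else 0))"
definition mu2 :: "cell list \<times> cell \<times> cell list \<Rightarrow> nat" where
  "mu2 p = (case p of (q,h,R) \<Rightarrow> (if h = SG then 3 else if h = SP then 2 else if h = SK then 1 else 0))"
definition mu3 :: "cell list \<times> cell \<times> cell list \<Rightarrow> nat" where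
  "mu3 p = (case p of (q,h,R) \<Rightarrow> (if h = SP then length (takeWhile (\<lambda>c. c = S0) R) else length q))"

lemma step_lift:
  assumes "\<forall>x. cfg x u \<longrightarrow> cfg (pacT x) u'"
    and "\<exists>s. \<forall>x. cfg x u' \<longrightarrow> (pacT^^s) x 0 \<in> A"
  shows "\<exists>s. \<forall>x. cfg x u \<longrightarrow> (pacT^^s) x 0 \<in> A"
proof -
  obtain s where s: "\<forall>x. cfg x u' \<longrightarrow> (pacT^^s) x 0 \<in> A" using assms(2) by blast
  have e: "(pacT^^(Suc s)) x = (pacT^^s) (pacT x)" for x by (simp only: funpow_Suc_right comp_def)
  have "\<forall>x. cfg x u \<longrightarrow> (pacT^^(Suc s)) x 0 \<in> A"
    using s assms(1) by (simp only: e) blast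
  then show ?thesis by blast
qed

lemma hdz01: "set R \<subseteq> {S0,S1} \<Longrightarrow> hdz R \<in> {S0,S1}"
  by (cases R) auto

lemma resp_aux:
  "\<forall>q h R. p = (q,h,R) \<longrightarrow> set q \<subseteq> {S0,S1} \<longrightarrow> set R \<subseteq> {S0,S1} \<longrightarrow> h \<in> {SK,SD,SG,SP}
     \<longrightarrow> (h \<in> {SG,SP} \<longrightarrow> S1 \<in> set R)
     \<longrightarrow> (\<exists>s. \<forall>x. cfg x (q @ h # R) \<longrightarrow> (pacT^^s) x 0 \<in> {SG,SK,SD})"
proof (induction p rule: wf_induct[OF wf_measures[of "[mu1,mu2,mu3]"]])
  case (1 p)
  show ?case
  proof (intro allI impI)
    fix q h R
    assume p: "p = (q,h,R)" and q01: "set q \<subseteq> {S0,S1}" and R01: "set R \<subseteq> {S0,S1}"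
      and h: "h \<in> {SK,SD,SG,SP}" and inv: "h \<in> {SG,SP} \<longrightarrow> S1 \<in> set R"
    let ?G = "\<exists>s. \<forall>x. cfg x (q @ h # R) \<longrightarrow> (pacT^^s) x 0 \<in> {SG,SK,SD}"
    have go: "?G" if e: "lst S0 (q @ h # R) = q' @ h' # R'" and "set q' \<subseteq> {S0,S1}" "set R' \<subseteq> {S0,S1}"
      "h' \<in> {SK,SD,SG,SP}" "h' \<in> {SG,SP} \<longrightarrow> S1 \<in> set R'"
      "((q',h',R'),(q,h,R)) \<in> measures [mu1,mu2,mu3]" for q' h' R'
    proof (rule step_lift)
      show "\<forall>x. cfg x (q @ h # R) \<longrightarrow> cfg (pacT x) (q' @ h' # R')"
        using cfg_step e by metis
      show "\<exists>s. \<forall>x. cfg x (q' @ h' # R') \<longrightarrow> (pacT^^s) x 0 \<in> {SG,SK,SD}"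
        using 1[rule_format, of "(q',h',R')" q' h' R'] that p by blast
    qed
    have fin: "?G" if "q = []" "h \<in> {SK,SD,SG}"
    proof -
      have "\<forall>x. cfg x (q @ h # R) \<longrightarrow> (pacT^^0) x 0 \<in> {SG,SK,SD}"
        using that by (auto simp: cfg_def word_pt_Cons0)
      then show ?thesis by blast
    qed
    have c0: "hdz R \<in> {S0,S1}" using R01 by (rule hdz01)
    have lstR: "lst a R = R" if "a \<noteq> SP" for a using R01 that by (rule lst_tail)
    show ?G
    proof (cases "h = SP")
      case False
      show ?G
      proof (cases "q = []")
        case True then show ?G using fin h False by auto
      next
        case qne: False
        then obtain q' b where qb: "q = q' @ [b]" by (metis rev_exhaust)
        have q'01: "set q' \<subseteq> {S0,S1}" and b01: "b \<in> {S0,S1}" using q01 qb by auto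
        define a0 where "a0 = last (S0 # q')"
        have a0: "a0 \<in> {S0,S1}" unfolding a0_def by (rule last01[OF q'01])
        have pre: "lst S0 (q @ h # R) = q' @ (pac_rule a0 b h # pac_rule b h (hdz R) # R)"
        proof -
          have "lst S0 (q @ h # R) = lst S0 (q' @ (b # h # R))" using qb by simp
          also have "\<dots> = q' @ lst a0 (b # h # R)"
            using lst_prefix[OF q'01, of S0 "b # h # R"] b01 by (auto simp: a0_def)
          also have "lst a0 (b # h # R) = pac_rule a0 b h # pac_rule b h (hdz R) # R"
            using lstR[of h] False by (simp add: lst_Cons)
          finally show ?thesis .
        qed
        consider "h = SK" | "h = SD" | "h = SG" using h False by auto
        then show ?G
        proof cases
          case 1
          show ?G
          proof (cases "b = S0")
            case True
            have "lst S0 (q @ h # R) = q' @ SK # (S0 # R)"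
              using pre 1 True a0 c0 by (auto simp: pac_rule_def)
            then show ?G
              by (rule go) (use q'01 R01 1 qb True in \<open>auto simp: in_measures mu1_def mu2_def mu3_def\<close>)
          next
            case False
            then have b1: "b = S1" using b01 by auto
            have "lst S0 (q @ h # R) = q' @ SD # (S0 # R)"
              using pre 1 b1 a0 c0 by (auto simp: pac_rule_def)
            then show ?G
              by (rule go) (use q'01 R01 1 qb b1 in \<open>auto simp: in_measures mu1_def mu2_def mu3_def\<close>)
          qed
        next
          case 2
          show ?G
          proof (cases "b = S0")
            case True
            have "lst S0 (q @ h # R) = q' @ SG # (S1 # R)"
              using pre 2 True a0 c0 by (auto simp: pac_rule_def)
            then show ?G
              by (rule go) (use q'01 R01 2 qb True in \<open>auto simp: in_measures mu1_def mu2_def mu3_def\<close>)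
          next
            case False
            then have b1: "b = S1" using b01 by auto
            have "lst S0 (q @ h # R) = q' @ SD # (S1 # R)"
              using pre 2 b1 a0 c0 by (auto simp: pac_rule_def)
            then show ?G
              by (rule go) (use q'01 R01 2 qb b1 in \<open>auto simp: in_measures mu1_def mu2_def mu3_def\<close>)
          qed
        next
          case 3
          show ?G
          proof (cases "b = S1")
            case True
            have "lst S0 (q @ h # R) = (q' @ [S1]) @ SP # R"
              using pre 3 True a0 c0 by (auto simp: pac_rule_def)
            then show ?G
              by (rule go) (use q'01 R01 3 qb True inv in \<open>auto simp: in_measures mu1_def mu2_def mu3_def\<close>)
          next
            case False
            then have b0: "b = S0" using b01 by auto
            show ?G
            proof (cases "a0 = S0")
              case True
              have "lst S0 (q @ h # R) = q' @ SG # (S0 # R)"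
                using pre 3 b0 True c0 by (auto simp: pac_rule_def)
              then show ?G
                by (rule go) (use q'01 R01 3 qb b0 inv in \<open>auto simp: in_measures mu1_def mu2_def mu3_def\<close>)
            next
              case False
              then have a1: "a0 = S1" using a0 by auto
              then have "q' \<noteq> []" by (auto simp: a0_def)
              then obtain q'' where q'': "q' = q'' @ [S1]" using a1 unfolding a0_def
                by (metis append_butlast_last_id last_ConsR)
              have q''01: "set q'' \<subseteq> {S0,S1}" using q'01 q'' by auto
              have "lst S0 (q @ h # R) = lst S0 (q'' @ (S1 # S0 # SG # R))" using qb q'' b0 3 by simp
              also have "\<dots> = q'' @ lst (last (S0 # q'')) (S1 # S0 # SG # R)"
                using lst_prefix[OF q''01, of S0 "S1 # S0 # SG # R"] by auto
              also have "lst (last (S0 # q'')) (S1 # S0 # SG # R) = S1 # SP # S0 # R"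
                using last01[OF q''01] c0 lstR[of SG]
                by (auto simp: lst_Cons pac_rule_def)
              finally have "lst S0 (q @ h # R) = (q'' @ [S1]) @ SP # (S0 # R)" by simp
              then show ?G
                by (rule go) (use q''01 R01 3 qb q'' b0 inv in \<open>auto simp: in_measures mu1_def mu2_def mu3_def\<close>)
            qed
          qed
        qed
      qed
    next
      case hP: True
      define a0 where "a0 = last (S0 # q)"
      have a0: "a0 \<in> {S0,S1}" unfolding a0_def by (rule last01[OF q01])
      have pre: "lst S0 (q @ h # R) = q @ lst a0 (SP # R)"
        using lst_prefix[OF q01, of S0 "SP # R"] hP by (auto simp: a0_def)
      obtain r1 R1 where R1: "R = r1 # R1" using inv hP by (cases R) auto
      have r1: "r1 \<in> {S0,S1}" and R101: "set R1 \<subseteq> {S0,S1}" using R01 R1 by auto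
      show ?G
      proof (cases "r1 = S1")
        case True
        have "lst a0 (SP # R) = SK # R"
          using R1 True a0 hdz01[OF R101] lst_tail[OF R101, of S1]
          by (auto simp: lst_Cons pac_rule_def)
        then have "lst S0 (q @ h # R) = q @ SK # R" using pre by simp
        then show ?G
          by (rule go) (use q01 R01 hP in \<open>auto simp: in_measures mu1_def mu2_def mu3_def\<close>)
      next
        case False
        then have r0: "r1 = S0" using r1 by auto
        obtain r2 R2 where R2: "R1 = r2 # R2" using inv hP R1 r0 by (cases R1) auto
        have r2: "r2 \<in> {S0,S1}" and R201: "set R2 \<subseteq> {S0,S1}" using R101 R2 by auto
        show ?G
        proof (cases "r2 = S1")
          case True
          have "lst a0 (SP # R) = S0 # SK # S1 # R2"
            using R1 R2 r0 True a0 hdz01[OF R201] lst_tail[OF R201, of S1]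
            by (auto simp: lst_Cons pac_rule_def)
          then have "lst S0 (q @ h # R) = (q @ [S0]) @ SK # (S1 # R2)" using pre by simp
          then show ?G
            by (rule go) (use q01 R201 hP R1 R2 r0 in \<open>auto simp: in_measures mu1_def mu2_def mu3_def\<close>)
        next
          case False
          then have r20: "r2 = S0" using r2 by auto
          have "lst a0 (SP # R) = S0 # SP # S0 # R2"
            using R1 R2 r0 r20 a0 hdz01[OF R201] lst_tail[OF R201, of S0]
            by (auto simp: lst_Cons pac_rule_def)
          then have "lst S0 (q @ h # R) = (q @ [S0]) @ SP # (S0 # R2)" using pre by simp
          then show ?G
            by (rule go) (use q01 R201 hP R1 R2 r0 r20 inv in \<open>auto simp: in_measures mu1_def mu2_def mu3_def\<close>)
        qed
      qed
    qed
  qed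
qed

lemma resp:
  assumes "set q \<subseteq> {S0,S1}"
  shows "\<exists>s. \<forall>x. cfg x (q @ [SK]) \<longrightarrow> (pacT^^s) x 0 \<in> {SG,SK,SD}"
  using resp_aux[rule_format, of "(q,SK,[])" q SK "[]"] assms by auto



lemma gap:
  fixes X :: "nat \<Rightarrow> int \<Rightarrow> cell" and l r :: int
  assumes step: "\<And>t i. X (Suc t) i = pac_rule (X t (i - 1)) (X t i) (X t (i + 1))"
    and H1: "\<And>t i. t \<ge> t1 \<Longrightarrow> l \<le> i \<Longrightarrow> i \<le> r \<Longrightarrow> X t i \<notin> {S1,SD}"
    and H2: "\<And>t. t \<ge> t1 \<Longrightarrow> X t (r + 1) = S1"
    and H3: "\<And>t. t \<ge> t1 \<Longrightarrow> X t (l - 1) \<noteq> SP"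
  shows "\<exists>T. \<forall>t\<ge>T. \<forall>i. l \<le> i \<and> i \<le> r \<longrightarrow> X t i = S0"
proof -
  define g where "g = nat (r - l + 1)"
  have gG: "\<forall>i. l \<le> i \<longrightarrow> i \<le> r \<longrightarrow> X (t1 + k) i = SG \<longrightarrow> i + int k \<le> r" for k
  proof (induction k)
    case 0 then show ?case by simp
  next
    case (Suc k)
    show ?case
    proof (intro allI impI)
      fix i assume i: "l \<le> i" "i \<le> r" and G: "X (t1 + Suc k) i = SG"
      then have "pac_rule (X (t1 + k) (i - 1)) (X (t1 + k) i) (X (t1 + k) (i + 1)) = SG"
        using step[of "t1 + k" i] by simp
      then have c: "X (t1 + k) (i + 1) \<in> {SG,SD}" by (rule rule_G)
      show "i + int (Suc k) \<le> r"
      proof (cases "i + 1 \<le> r")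
        case True
        then have "X (t1 + k) (i + 1) \<noteq> SD" using H1[of "t1 + k" "i + 1"] i by auto
        then have "X (t1 + k) (i + 1) = SG" using c by auto
        then have "i + 1 + int k \<le> r" using Suc.IH True i by auto
        then show ?thesis by simp
      next
        case False
        then have "i + 1 = r + 1" using i by simp
        then have "X (t1 + k) (i + 1) = S1" using H2[of "t1 + k"] by simp
        then show ?thesis using c by simp
      qed
    qed
  qed
  have noG: "X t i \<noteq> SG" if "t \<ge> t1 + g" "l \<le> i" "i \<le> r" for t i
  proof
    assume A: "X t i = SG"
    define k where "k = t - (t1)"
    have kk: "t = t1 + k" "k \<ge> g" using that unfolding k_def by auto
    have "i + int k \<le> r" using gG that A kk(1) by auto
    then show False using kk(2) that unfolding g_def by linarith
  qed
  have gP: "\<forall>i. l \<le> i \<longrightarrow> i \<le> r \<longrightarrow> X (t1 + g + k) i = SP \<longrightarrow> i \<ge> l + int k" for k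
  proof (induction k)
    case 0 then show ?case by simp
  next
    case (Suc k)
    show ?case
    proof (intro allI impI)
      fix i assume i: "l \<le> i" "i \<le> r" and P: "X (t1 + g + Suc k) i = SP"
      then have "pac_rule (X (t1 + g + k) (i - 1)) (X (t1 + g + k) i) (X (t1 + g + k) (i + 1)) = SP"
        using step[of "t1 + g + k" i] by simp
      then have c: "(X (t1 + g + k) (i - 1) = S1 \<and> (X (t1 + g + k) (i + 1) = SG \<or> X (t1 + g + k) i = SG))
          \<or> X (t1 + g + k) (i - 1) = SP" by (rule rule_P)
      have n1: "X (t1 + g + k) i \<noteq> SG" using noG i by auto
      have n2: "X (t1 + g + k) (i + 1) \<noteq> SG"
      proof (cases "i + 1 \<le> r")
        case True then show ?thesis using noG i by auto
      next
        case False
        then have "i + 1 = r + 1" using i by simp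
        then show ?thesis using H2[of "t1 + g + k"] by simp
      qed
      have pl: "X (t1 + g + k) (i - 1) = SP" using c n1 n2 by auto
      show "i \<ge> l + int (Suc k)"
      proof (cases "l \<le> i - 1")
        case True
        then have "i - 1 \<ge> l + int k" using Suc.IH[rule_format, of "i - 1"] pl i by linarith
        then show ?thesis by simp
      next
        case False
        then have "i - 1 = l - 1" using i by simp
        then show ?thesis using H3[of "t1 + g + k"] pl by simp
      qed
    qed
  qed
  have noP: "X t i \<noteq> SP" if "t \<ge> t1 + g + g" "l \<le> i" "i \<le> r" for t i
  proof
    assume A: "X t i = SP"
    define k where "k = t - (t1 + g)"
    have kk: "t = t1 + g + k" "k \<ge> g" using that unfolding k_def by auto
    have "i \<ge> l + int k" using gP that A kk(1) by auto
    then show False using kk(2) that unfolding g_def by linarith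
  qed
  have gK: "\<forall>i. l \<le> i \<longrightarrow> i \<le> r \<longrightarrow> X (t1 + g + g + k) i = SK \<longrightarrow> i + int k \<le> r" for k
  proof (induction k)
    case 0 then show ?case by simp
  next
    case (Suc k)
    show ?case
    proof (intro allI impI)
      fix i assume i: "l \<le> i" "i \<le> r" and K: "X (t1 + g + g + Suc k) i = SK"
      then have "pac_rule (X (t1 + g + g + k) (i - 1)) (X (t1 + g + g + k) i) (X (t1 + g + g + k) (i + 1)) = SK"
        using step[of "t1 + g + g + k" i] by simp
      then have c: "X (t1 + g + g + k) (i + 1) = SK \<or> X (t1 + g + g + k) (i - 1) = SP \<or> X (t1 + g + g + k) i = SP"
        by (rule rule_K)
      have n1: "X (t1 + g + g + k) i \<noteq> SP" using noP i by auto
      have n2: "X (t1 + g + g + k) (i - 1) \<noteq> SP"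
      proof (cases "l \<le> i - 1")
        case True then show ?thesis using noP i by auto
      next
        case False
        then have "i - 1 = l - 1" using i by simp
        then show ?thesis using H3[of "t1 + g + g + k"] by simp
      qed
      have kr: "X (t1 + g + g + k) (i + 1) = SK" using c n1 n2 by auto
      show "i + int (Suc k) \<le> r"
      proof (cases "i + 1 \<le> r")
        case True
        then have "i + 1 + int k \<le> r" using Suc.IH kr i by auto
        then show ?thesis by simp
      next
        case False
        then have "i + 1 = r + 1" using i by simp
        then show ?thesis using H2[of "t1 + g + g + k"] kr by simp
      qed
    qed
  qed
  have noK: "X t i \<noteq> SK" if "t \<ge> t1 + g + g + g" "l \<le> i" "i \<le> r" for t i
  proof
    assume A: "X t i = SK"
    define k where "k = t - (t1 + g + g)"
    have kk: "t = t1 + g + g + k" "k \<ge> g" using that unfolding k_def by auto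
    have "i + int k \<le> r" using gK that A kk(1) by auto
    then show False using kk(2) that unfolding g_def by linarith
  qed
  have "\<forall>t\<ge>t1 + g + g + g. \<forall>i. l \<le> i \<and> i \<le> r \<longrightarrow> X t i = S0"
  proof (intro allI impI)
    fix t i assume t: "t1 + g + g + g \<le> t" and i: "l \<le> i \<and> i \<le> r"
    have "X t i \<notin> {S1,SD}" using H1[of t i] t i by auto
    moreover have "X t i \<noteq> SG" using noG[of t i] t i by auto
    moreover have "X t i \<noteq> SP" using noP[of t i] t i by auto
    moreover have "X t i \<noteq> SK" using noK[of t i] t i by auto
    ultimately show "X t i = S0" by (cases "X t i") auto
  qed
  then show ?thesis by blast
qed



definition orb :: "cell list \<Rightarrow> nat \<Rightarrow> int \<Rightarrow> cell" where
  "orb w t = (pacT^^t) (word_pt (w @ [S1]))"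

lemma orb_Suc: "orb w (Suc t) i = pac_rule (orb w t (i - 1)) (orb w t i) (orb w t (i + 1))"
  by (simp add: orb_def pacT_app)

lemma orb_left: "i < 0 \<Longrightarrow> orb w t i \<in> {S0,SG,SK}"
proof (induction t arbitrary: i)
  case 0 then show ?case by (simp add: orb_def word_pt_neg)
next
  case (Suc t)
  have "orb w t (i - 1) \<in> {S0,SG,SK}" "orb w t i \<in> {S0,SG,SK}" using Suc by auto
  then show ?case unfolding orb_Suc by (rule rule_left)
qed

lemma orb_right: "orb w t (int (length w)) = S1 \<and> (\<forall>i > int (length w). orb w t i = S0)"
proof (induction t)
  case 0
  have "orb w 0 (int (length w)) = S1" by (simp add: orb_def word_pt_def)
  moreover have "\<forall>i > int (length w). orb w 0 i = S0" by (simp add: orb_def word_pt_def)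
  ultimately show ?case by blast
next
  case (Suc t)
  have a: "orb w (Suc t) (int (length w)) = S1"
    using Suc rule_door[of S1 "orb w t (int (length w) - 1)" S0] by (simp add: orb_Suc)
  have b: "orb w (Suc t) i = S0" if "i > int (length w)" for i
  proof -
    have "orb w t (i - 1) \<in> {S0,S1}" using Suc that
      by (cases "i - 1 = int (length w)") auto
    moreover have "orb w t i = S0" "orb w t (i + 1) = S0" using Suc that by auto
    ultimately show ?thesis by (auto simp: orb_Suc)
  qed
  show ?case using a b by blast
qed

lemma orb_door: "orb w t i \<in> {S1,SD} \<Longrightarrow> orb w (Suc t) i \<in> {S1,SD}"
  by (simp add: orb_Suc rule_door)

lemma orb_door_mono: "t \<le> t' \<Longrightarrow> orb w t i \<in> {S1,SD} \<Longrightarrow> orb w t' i \<in> {S1,SD}"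
proof (induction t' rule: dec_induct)
  case base then show ?case by simp
next
  case (step m) then show ?case using orb_door by blast
qed

definition dset :: "cell list \<Rightarrow> nat \<Rightarrow> int set" where
  "dset w t = {i. orb w t i \<in> {S1,SD}}"

lemma dset_sub: "dset w t \<subseteq> {0..int (length w)}"
proof
  fix i assume i: "i \<in> dset w t"
  have "\<not> i < 0" using i orb_left[of i w t] by (auto simp: dset_def)
  moreover have "\<not> i > int (length w)" using i orb_right[of w t] by (auto simp: dset_def)
  ultimately show "i \<in> {0..int (length w)}" by auto
qed

lemma dset_mono: "t \<le> t' \<Longrightarrow> dset w t \<subseteq> dset w t'"
  using orb_door_mono by (auto simp: dset_def)

lemma dset_stable: "\<exists>t0. \<forall>t\<ge>t0. dset w t = dset w t0"
proof -
  define B where "B = card {0..int (length w)}"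
  have cb: "card (dset w t) \<le> B" for t
    unfolding B_def by (rule card_mono) (auto simp: dset_sub)
  have fin: "finite (dset w t)" for t using dset_sub finite_subset by blast
  have fr: "finite (range (\<lambda>t. card (dset w t)))"
    by (rule finite_subset[of _ "{..B}"]) (use cb in auto)
  define m where "m = Max (range (\<lambda>t. card (dset w t)))"
  have "m \<in> range (\<lambda>t. card (dset w t))" unfolding m_def by (rule Max_in[OF fr]) auto
  then obtain t0 where t0m: "card (dset w t0) = m" by auto
  have t0: "\<forall>t. card (dset w t) \<le> card (dset w t0)"
    unfolding t0m m_def using fr by (auto intro: Max_ge)
  have "dset w t = dset w t0" if "t \<ge> t0" for t
    using card_seteq[OF fin dset_mono[OF that] t0[rule_format, of t]] by simp
  then show ?thesis by blast
qed

lemma quiescent: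
  "\<exists>T. \<forall>t\<ge>T. \<forall>i. 0 \<le> i \<and> i \<le> int (length w) \<longrightarrow> orb w t i \<in> {S0,S1}"
proof -
  define n where "n = int (length w)"
  obtain t0 where t0: "\<forall>t\<ge>t0. dset w t = dset w t0" using dset_stable by blast
  define DS where "DS = dset w t0"
  have door: "orb w t i \<in> {S1,SD} \<longleftrightarrow> i \<in> DS" if "t \<ge> t0" for t i
  proof -
    have e: "{i. orb w t i \<in> {S1,SD}} = DS" unfolding DS_def using t0 that unfolding dset_def by blast
    show ?thesis by (simp only: e[symmetric] mem_Collect_eq)
  qed
  have DSn: "DS \<subseteq> {0..n}" using dset_sub by (simp add: DS_def n_def)
  have "orb w t0 n = S1" using orb_right[of w t0] unfolding n_def by blast
  then have nDS: "n \<in> DS" using door[OF order_refl, of n] by blast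
  define Q where "Q i \<longleftrightarrow> (\<exists>T. \<forall>t\<ge>T. orb w t i \<in> {S0,S1})" for i
  have main: "\<forall>i. nat (n - i) = d \<longrightarrow> 0 \<le> i \<longrightarrow> i \<le> n \<longrightarrow> Q i" for d
  proof (induction d rule: less_induct)
    case (less d)
    show ?case
    proof (intro allI impI)
      fix i assume d: "nat (n - i) = d" and i0: "0 \<le> i" and iN: "i \<le> n"
      have IH: "Q i'" if "i < i'" "i' \<le> n" for i'
      proof -
        have lt: "nat (n - i') < d" using that d by auto
        show ?thesis using less.IH[OF lt, rule_format, OF refl] that i0 by auto
      qed
      show "Q i"
      proof (cases "i \<in> DS")
        case True
        show ?thesis
        proof (cases "i = n")
          case True
          then show ?thesis using orb_right[of w] by (auto simp: Q_def n_def)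
        next
          case False
          then obtain T' where T': "\<forall>t\<ge>T'. orb w t (i + 1) \<in> {S0,S1}"
            using IH[of "i + 1"] iN by (auto simp: Q_def)
          have "orb w t i \<in> {S0,S1}" if tt: "t \<ge> Suc (max T' t0)" for t
          proof -
            obtain t' where t': "t = Suc t'" using tt by (metis Suc_le_D)
            have "orb w t' i \<in> {S1,SD}" using door[of t' i] True t' tt by auto
            moreover have "orb w t' (i + 1) \<in> {S0,S1}" using T' t' tt by auto
            ultimately show ?thesis using t' by (auto simp: orb_Suc rule_door)
          qed
          then show ?thesis unfolding Q_def by blast
        qed
      next
        case False
        have iln: "i < n" using False nDS iN by (cases "i = n") auto
        have exr: "\<exists>k::nat. i + 1 + int k \<in> DS"
          by (rule exI[of _ "nat (n - i - 1)"]) (use iln nDS in auto)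
        define kr where "kr = (LEAST k::nat. i + 1 + int k \<in> DS)"
        have hr: "i + 1 + int kr \<in> DS" unfolding kr_def using exr by (rule LeastI_ex)
        have hr': "i + 1 + int k \<notin> DS" if "k < kr" for k
          using not_less_Least[of k "\<lambda>k. i + 1 + int k \<in> DS"] that by (simp add: kr_def)
        have exl: "\<exists>k::nat. i - 1 - int k \<in> DS \<or> i - 1 - int k < 0"
          by (rule exI[of _ "nat i"]) (use i0 in auto)
        define kl where "kl = (LEAST k::nat. i - 1 - int k \<in> DS \<or> i - 1 - int k < 0)"
        have hl: "i - 1 - int kl \<in> DS \<or> i - 1 - int kl < 0" unfolding kl_def using exl by (rule LeastI_ex)
        have hl': "i - 1 - int k \<notin> DS" if "k < kl" for k
          using not_less_Least[of k "\<lambda>k. i - 1 - int k \<in> DS \<or> i - 1 - int k < 0"] that by (auto simp: kl_def)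
        define r where "r = i + int kr"
        define l where "l = i - int kl"
        have r1n: "r + 1 \<le> n" using hr DSn by (auto simp: r_def)
        obtain Tr where Tr: "\<forall>t\<ge>Tr. orb w t (r + 1) \<in> {S0,S1}"
          using IH[of "r + 1"] r1n by (auto simp: Q_def r_def)
        define t1 where "t1 = max Tr t0"
        have "\<exists>T. \<forall>t\<ge>T. \<forall>j. l \<le> j \<and> j \<le> r \<longrightarrow> orb w t j = S0"
        proof (rule gap[of "orb w" t1])
          show "orb w (Suc t) j = pac_rule (orb w t (j - 1)) (orb w t j) (orb w t (j + 1))" for t j
            by (rule orb_Suc)
        next
          fix t j assume t: "t1 \<le> t" and j: "l \<le> j" "j \<le> r"
          have "j \<notin> DS"
          proof (cases "j = i")
            case True then show ?thesis using False by simp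
          next
            case ne: False
            show ?thesis
            proof (cases "j > i")
              case True
              then have "j = i + 1 + int (nat (j - i - 1))" "nat (j - i - 1) < kr" using j by (auto simp: r_def)
              then show ?thesis using hr' by metis
            next
              case False
              then have "j = i - 1 - int (nat (i - 1 - j))" "nat (i - 1 - j) < kl" using j ne by (auto simp: l_def)
              then show ?thesis using hl' by metis
            qed
          qed
          then show "orb w t j \<notin> {S1,SD}" using door[of t j] t by (auto simp: t1_def)
        next
          fix t assume t: "t1 \<le> t"
          have "orb w t (r + 1) \<in> {S0,S1}" using Tr t by (auto simp: t1_def)
          moreover have "orb w t (r + 1) \<in> {S1,SD}" using door[of t "r + 1"] hr t by (auto simp: t1_def r_def add.commute add.left_commute)
          ultimately show "orb w t (r + 1) = S1" by auto
        next
          fix t assume t: "t1 \<le> t"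
          show "orb w t (l - 1) \<noteq> SP"
          proof (cases "l - 1 < 0")
            case True then show ?thesis using orb_left[of "l - 1" w t] by auto
          next
            case False
            have eq: "l - 1 = i - 1 - int kl" by (simp add: l_def)
            have "\<not> (i - 1 - int kl < 0)" using False eq by linarith
            then have "i - 1 - int kl \<in> DS" using hl by blast
            then have "l - 1 \<in> DS" by (simp only: eq)
            then show ?thesis using door[of t "l - 1"] t by (auto simp: t1_def)
          qed
        qed
        then obtain T where "\<forall>t\<ge>T. \<forall>j. l \<le> j \<and> j \<le> r \<longrightarrow> orb w t j = S0" by blast
        moreover have "l \<le> i" "i \<le> r" by (auto simp: l_def r_def)
        ultimately show ?thesis unfolding Q_def by auto
      qed
    qed
  qed
  have "\<forall>i\<in>{0..n}. Q i"
  proof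
    fix i assume "i \<in> {0..n}"
    then have "0 \<le> i" "i \<le> n" by auto
    then show "Q i" using main[of "nat (n - i)", rule_format, OF refl] by blast
  qed
  then have Qex: "\<forall>i\<in>{0..n}. \<exists>T. \<forall>t\<ge>T. orb w t i \<in> {S0,S1}" unfolding Q_def .
  obtain f where f: "\<forall>i\<in>{0..n}. \<forall>t\<ge>f i. orb w t i \<in> {S0,S1}"
    using bchoice[OF Qex] by blast
  define T where "T = Max (f ` {0..n})"
  have "\<forall>t\<ge>T. \<forall>i. 0 \<le> i \<and> i \<le> n \<longrightarrow> orb w t i \<in> {S0,S1}"
  proof (intro allI impI)
    fix t i assume t: "T \<le> t" and i: "0 \<le> i \<and> i \<le> n"
    have "f i \<le> T" unfolding T_def using i by (intro Max_ge) auto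
    then show "orb w t i \<in> {S0,S1}" using f i t by auto
  qed
  then show ?thesis by (auto simp: n_def)
qed



lemma stable:
  "\<exists>T. (\<forall>t\<ge>T. \<forall>i\<ge>0. orb w t i = orb w T i) \<and> (\<forall>i. 0 \<le> i \<and> i \<le> int (length w) \<longrightarrow> orb w T i \<in> {S0,S1})"
proof -
  obtain Tq where Tq: "\<forall>t\<ge>Tq. \<forall>i. 0 \<le> i \<and> i \<le> int (length w) \<longrightarrow> orb w t i \<in> {S0,S1}"
    using quiescent by blast
  obtain t0 where t0: "\<forall>t\<ge>t0. dset w t = dset w t0" using dset_stable by blast
  define T where "T = max Tq t0"
  have "orb w t i = orb w T i" if t: "t \<ge> T" and i: "i \<ge> 0" for t i
  proof (cases "i \<le> int (length w)")
    case True
    have a: "orb w t i \<in> {S0,S1}" "orb w T i \<in> {S0,S1}" using Tq t i True by (auto simp: T_def)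
    have "t \<ge> t0" "T \<ge> t0" using t by (auto simp: T_def)
    then have e1: "dset w t = dset w t0" and e2: "dset w T = dset w t0" using t0 by blast+
    have "(orb w t i \<in> {S1,SD}) = (orb w T i \<in> {S1,SD})"
    proof -
      have "(orb w t i \<in> {S1,SD}) = (i \<in> dset w t)" by (simp add: dset_def)
      also have "\<dots> = (i \<in> dset w T)" by (simp only: e1 e2)
      also have "\<dots> = (orb w T i \<in> {S1,SD})" by (simp add: dset_def)
      finally show ?thesis .
    qed
    then show ?thesis using a by auto
  next
    case False
    then show ?thesis using orb_right[of w t] orb_right[of w T] by auto
  qed
  moreover have "\<forall>i. 0 \<le> i \<and> i \<le> int (length w) \<longrightarrow> orb w T i \<in> {S0,S1}"
    using Tq by (auto simp: T_def)
  ultimately show ?thesis by blast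
qed

lemma init_shift:
  "word_pt (w @ [S1] @ replicate m S0 @ [SK]) p =
     (if p = int (length w) + 1 + int m then SK else word_pt (w @ [S1]) p)"
proof (cases "p < 0")
  case True then show ?thesis by (simp add: word_pt_def)
next
  case False
  then obtain k where k: "p = int k" by (metis nonneg_int_cases not_less)
  consider "k < length w" | "k = length w" | "length w < k \<and> k < length w + 1 + m" | "k = length w + 1 + m" | "k > length w + 1 + m"
    by linarith
  then show ?thesis
  proof cases
    case 1 then show ?thesis using k by (auto simp: word_pt_def nth_append)
  next
    case 2 then show ?thesis using k by (auto simp: word_pt_def nth_append)
  next
    case 3 then show ?thesis using k by (auto simp: word_pt_def nth_append)
  next
    case 4 then show ?thesis using k by (auto simp: word_pt_def nth_append)
  next
    case 5 then show ?thesis using k by (auto simp: word_pt_def nth_append)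
  qed
qed

lemma shift:
  "t \<le> m \<Longrightarrow> (pacT^^t) (word_pt (w @ [S1] @ replicate m S0 @ [SK])) p =
     (if p = int (length w) + 1 + int m - int t then SK else orb w t p)"
proof (induction t arbitrary: p)
  case 0
  then show ?case using init_shift[of w m p] by (simp add: orb_def)
next
  case (Suc t)
  define n where "n = int (length w)"
  define mm where "mm = n + 1 + int m - int t"
  have mm: "mm \<ge> n + 2" using Suc.prems by (simp add: mm_def)
  define Y where "Y = (pacT^^t) (word_pt (w @ [S1] @ replicate m S0 @ [SK]))"
  have Y: "Y q = (if q = mm then SK else orb w t q)" for q
    using Suc.IH[of q] Suc.prems by (simp add: Y_def mm_def n_def)
  have R: "orb w t n = S1" "\<And>q. q > n \<Longrightarrow> orb w t q = S0"
    using orb_right[of w t] by (auto simp: n_def)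
  have R': "\<And>q. q > n \<Longrightarrow> orb w (Suc t) q = S0"
    using orb_right[of w "Suc t"] by (auto simp: n_def)
  have lhs: "(pacT^^Suc t) (word_pt (w @ [S1] @ replicate m S0 @ [SK])) p = pac_rule (Y (p - 1)) (Y p) (Y (p + 1))"
    by (simp add: Y_def pacT_app)
  have target: "int (length w) + 1 + int m - int (Suc t) = mm - 1" by (simp add: mm_def n_def)
  show ?case
  proof (cases "p = mm - 1")
    case True
    have "Y (p - 1) \<in> {S0,S1}"
    proof (cases "p - 1 = n")
      case True then show ?thesis using Y R mm \<open>p = mm - 1\<close> by auto
    next
      case False then show ?thesis using Y R mm \<open>p = mm - 1\<close> by auto
    qed
    moreover have "Y p = S0" using Y R mm True by auto
    moreover have "Y (p + 1) = SK" using Y True by auto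
    ultimately show ?thesis unfolding lhs target using True by auto
  next
    case ne1: False
    show ?thesis
    proof (cases "p = mm")
      case True
      have "Y (p - 1) = S0" "Y p = SK" "Y (p + 1) = S0" using Y R mm True by auto
      then show ?thesis unfolding lhs target using True R' mm by auto
    next
      case ne2: False
      show ?thesis
      proof (cases "p = mm + 1")
        case True
        have "Y (p - 1) = SK" "Y p = S0" "Y (p + 1) = S0" using Y R mm True by auto
        then show ?thesis unfolding lhs target using True R' mm by auto
      next
        case False
        have "Y (p - 1) = orb w t (p - 1)" "Y p = orb w t p" "Y (p + 1) = orb w t (p + 1)"
          using Y ne1 ne2 False by auto
        then show ?thesis unfolding lhs target using ne1 by (simp add: orb_Suc)
      qed
    qed
  qed
qed

theorem mainTheorem1:
  fixes w :: "cell list"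
  assumes "w \<noteq> []"
  shows "\<exists>N M :: nat. \<forall>j :: nat.
           (pacT ^^ (N + j)) (word_pt (w @ [S1] @ replicate (M + j) S0 @ [SK])) 0 \<in> {SG, SK, SD}"
proof -
  define n where "n = int (length w)"
  obtain T where T1: "\<forall>t\<ge>T. \<forall>i\<ge>0. orb w t i = orb w T i"
    and T2: "\<forall>i. 0 \<le> i \<and> i \<le> n \<longrightarrow> orb w T i \<in> {S0,S1}"
    using stable[of w] unfolding n_def by blast
  define \<sigma> where "\<sigma> = map (\<lambda>k. orb w T (int k)) [0..<Suc (length w)]"
  have len: "length \<sigma> = Suc (length w)" by (simp add: \<sigma>_def)
  have s01: "set \<sigma> \<subseteq> {S0,S1}"
  proof
    fix c assume "c \<in> set \<sigma>"
    then obtain k where k: "k < Suc (length w)" "c = orb w T (int k)"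
      by (auto simp: \<sigma>_def simp del: upt_Suc)
    have "0 \<le> int k \<and> int k \<le> n" using k by (simp add: n_def)
    then show "c \<in> {S0,S1}" using T2 k by blast
  qed
  obtain s where s: "\<forall>x. cfg x (\<sigma> @ [SK]) \<longrightarrow> (pacT^^s) x 0 \<in> {SG,SK,SD}"
    using resp[OF s01] by blast
  have "\<forall>j. (pacT ^^ (s + T + j)) (word_pt (w @ [S1] @ replicate (T + j) S0 @ [SK])) 0 \<in> {SG, SK, SD}"
  proof
    fix j
    define V where "V = word_pt (w @ [S1] @ replicate (T + j) S0 @ [SK])"
    define Z where "Z = (pacT^^(T + j)) V"
    have Z: "Z p = (if p = n + 1 then SK else orb w (T + j) p)" for p
      using shift[of "T + j" "T + j" w p] by (simp add: Z_def V_def n_def)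
    have "cfg Z (\<sigma> @ [SK])"
      unfolding cfg_def
    proof (intro conjI allI impI)
      fix i :: int assume "i < 0"
      then show "Z i \<in> {S0,SG,SK}" using Z[of i] orb_left[of i w "T + j"] by (auto simp: n_def)
    next
      fix i :: int assume i0: "0 \<le> i"
      show "Z i = word_pt (\<sigma> @ [SK]) i"
      proof (cases "i \<le> n")
        case True
        obtain k where k0: "i = int k" using i0 nonneg_int_cases by blast
        then have k: "i = int k" "k < Suc (length w)" using True by (auto simp: n_def)
        have "word_pt (\<sigma> @ [SK]) i = \<sigma> ! k" using k len by (simp add: word_pt_def nth_append)
        also have "\<dots> = orb w T i" using k by (simp add: \<sigma>_def del: upt_Suc)
        also have "\<dots> = orb w (T + j) i" using T1[rule_format, of "T + j" i] i0 by simp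
        finally show ?thesis using Z[of i] True by auto
      next
        case False
        show ?thesis
        proof (cases "i = n + 1")
          case True
          have ii: "i = int (length \<sigma>)" using True len by (simp add: n_def)
          have "word_pt (\<sigma> @ [SK]) i = SK" unfolding ii word_pt_def by simp
          then show ?thesis using Z[of i] True by auto
        next
          case ne: False
          then have "word_pt (\<sigma> @ [SK]) i = S0" using len False by (simp add: word_pt_def nth_append n_def)
          moreover have "orb w (T + j) i = S0" using orb_right[of w "T + j"] False by (auto simp: n_def)
          ultimately show ?thesis using Z[of i] ne by auto
        qed
      qed
    qed
    then have "(pacT^^s) Z 0 \<in> {SG,SK,SD}" using s by blast
    moreover have "(pacT ^^ (s + T + j)) V = (pacT^^s) Z"
      by (simp add: Z_def funpow_add add.assoc)
    ultimately show "(pacT ^^ (s + T + j)) (word_pt (w @ [S1] @ replicate (T + j) S0 @ [SK])) 0 \<in> {SG, SK, SD}"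
      by (simp add: V_def)
  qed
  then show ?thesis by blast
qed


end
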